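(* Let $m\ge1$, $\delta\in(0,\tfrac12)$, $\epsilon\in(0,1)$, and let $r(m,\epsilon):=\max\{r\in\{0,\dots,m\}: f^{avg}_{m,r}<1-\epsilon\}$ (with $r(m,\epsilon):=-1$ if this set is empty, and $\binom{m}{\le -1}:=0$). Then \[\frac{\binom{m}{\le r(m,\epsilon)}}{2^m}\ge 1-\frac{h(\delta)}{1-\epsilon}.\]
   Context: $h(\delta)=-\delta\log_2\delta-(1-\delta)\log_2(1-\delta)$ and $\binom{m}{\le r}=\sum_{i=0}^r\binom{m}{i}$. Every function $\mathbb{F}_2^m\to\mathbb{F}_2$ is uniquely a multilinear polynomial $\sum_{S\subseteq[m]}c_Sx_S$, $x_S=\prod_{i\in S}x_i$. Let $Z=(Z_x)_{x\in\mathbb{F}_2^m}$ have i.i.d. Bernoulli$(\delta)$ entries and let $W=(W_S)_{S\subseteq[m]}$ be the coefficient vector of the multilinear polynomial whose evaluation table is $Z$. Write $W_r=(W_S)_{|S|=r}$, $W_{>r}=(W_S)_{|S|>r}$. Define $f_{m,r}:=H(W_r\mid W_{>r})$ (base-2 Shannon conditional entropy) and $f^{avg}_{m,r}:=f_{m,r}/\binom{m}{r}$. *)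

theory Defs
  imports Complex_Main
begin

(* Points of F_2^m are encoded by their supports: subsets of {..<m}.
   A function F_2^m -> F_2 (evaluation table) is a map  nat set => bool
   that is False outside the cube. F_2 is encoded as bool (True = 1). *)
definition cube :: "nat \<Rightarrow> nat set set" where
  "cube m = Pow {..<m}"

definition tables :: "nat \<Rightarrow> (nat set \<Rightarrow> bool) set" where
  "tables m = {z. \<forall>x. z x \<longrightarrow> x \<in> cube m}"

(* evaluation of the multilinear polynomial sum_S c_S x_S at the point with support x:
   x_S = 1 iff S \<subseteq> x; sum taken in F_2 *)
definition eval_poly :: "(nat set \<Rightarrow> bool) \<Rightarrow> nat set \<Rightarrow> bool" where
  "eval_poly c x = odd (card {S. S \<subseteq> x \<and> c S})"

definition coeffs :: "nat \<Rightarrow> (nat set \<Rightarrow> bool) \<Rightarrow> nat set \<Rightarrow> bool" where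
  "coeffs m z = (THE c. (\<forall>S. c S \<longrightarrow> S \<in> cube m) \<and> (\<forall>x\<in>cube m. eval_poly c x = z x))"

definition prob_tab :: "nat \<Rightarrow> real \<Rightarrow> (nat set \<Rightarrow> bool) \<Rightarrow> real" where
  "prob_tab m \<delta> z = \<delta> ^ card {x\<in>cube m. z x} * (1 - \<delta>) ^ card {x\<in>cube m. \<not> z x}"

definition prob_event :: "nat \<Rightarrow> real \<Rightarrow> ((nat set \<Rightarrow> bool) \<Rightarrow> bool) \<Rightarrow> real" where
  "prob_event m \<delta> E = (\<Sum>z\<in>{z\<in>tables m. E z}. prob_tab m \<delta> z)"

definition cond_entropy :: "nat \<Rightarrow> real \<Rightarrow> ((nat set \<Rightarrow> bool) \<Rightarrow> 'a) \<Rightarrow> ((nat set \<Rightarrow> bool) \<Rightarrow> 'b) \<Rightarrow> real" where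
  "cond_entropy m \<delta> A B =
     (\<Sum>ab\<in>(\<lambda>z. (A z, B z)) ` tables m.
        let pab = prob_event m \<delta> (\<lambda>z. A z = fst ab \<and> B z = snd ab);
            pb = prob_event m \<delta> (\<lambda>z. B z = snd ab)
        in pab * log 2 (pb / pab))"

definition W_eq :: "nat \<Rightarrow> nat \<Rightarrow> (nat set \<Rightarrow> bool) \<Rightarrow> nat set \<Rightarrow> bool" where
  "W_eq m r z = (\<lambda>S. if S \<in> cube m \<and> card S = r then coeffs m z S else False)"

definition W_gt :: "nat \<Rightarrow> nat \<Rightarrow> (nat set \<Rightarrow> bool) \<Rightarrow> nat set \<Rightarrow> bool" where
  "W_gt m r z = (\<lambda>S. if S \<in> cube m \<and> card S > r then coeffs m z S else False)"

definition f_ent :: "nat \<Rightarrow> real \<Rightarrow> nat \<Rightarrow> real" where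
  "f_ent m \<delta> r = cond_entropy m \<delta> (W_eq m r) (W_gt m r)"

definition f_avg :: "nat \<Rightarrow> real \<Rightarrow> nat \<Rightarrow> real" where
  "f_avg m \<delta> r = f_ent m \<delta> r / real (m choose r)"

definition r_thr :: "nat \<Rightarrow> real \<Rightarrow> real \<Rightarrow> int" where
  "r_thr m \<delta> \<epsilon> =
     (if {r. r \<le> m \<and> f_avg m \<delta> r < 1 - \<epsilon>} = {} then -1
      else int (Max {r. r \<le> m \<and> f_avg m \<delta> r < 1 - \<epsilon>}))"

definition binom_le :: "nat \<Rightarrow> int \<Rightarrow> nat" where
  "binom_le m k = (\<Sum>i\<in>{0..k}. m choose nat i)"

definition bin_entropy :: "real \<Rightarrow> real" where
  "bin_entropy \<delta> = - \<delta> * log 2 \<delta> - (1 - \<delta>) * log 2 (1 - \<delta>)"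

end

theory Submission imports Defs begin

lemma finite_cube: "finite (cube m)" by (simp add: cube_def)
lemma card_cube: "card (cube m) = 2 ^ m" by (simp add: cube_def card_Pow)

lemma tables_eq: "tables m = (\<lambda>A x. x \<in> A) ` Pow (cube m)"
proof
  show "tables m \<subseteq> (\<lambda>A x. x \<in> A) ` Pow (cube m)"
  proof
    fix z assume "z \<in> tables m"
    then have "{x. z x} \<in> Pow (cube m)" "z = (\<lambda>x. x \<in> {x. z x})" by (auto simp: tables_def)
    then show "z \<in> (\<lambda>A x. x \<in> A) ` Pow (cube m)" by blast
  qed
qed (auto simp: tables_def)

lemma finite_tables: "finite (tables m)"
  by (simp add: tables_eq finite_cube)

lemma bij_tables: "bij_betw (\<lambda>A x. x \<in> A) (Pow (cube m)) (tables m)"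
  unfolding bij_betw_def tables_eq
  by (auto simp: inj_on_def fun_eq_iff)

lemma sum_tables: "(\<Sum>z\<in>tables m. g z) = (\<Sum>A\<in>Pow (cube m). g (\<lambda>x. x \<in> A))"
  using sum.reindex_bij_betw[OF bij_tables, of g] by simp

lemma prob_tab_Pow: "A \<subseteq> cube m \<Longrightarrow>
  prob_tab m d (\<lambda>x. x \<in> A) = d ^ card A * (1 - d) ^ card (cube m - A)"
proof -
  assume "A \<subseteq> cube m"
  then have "{x\<in>cube m. x \<in> A} = A" "{x\<in>cube m. x \<notin> A} = cube m - A" by auto
  then show ?thesis by (simp add: prob_tab_def)
qed

lemma binom_sums:
  fixes d :: real
  assumes "finite X"
  shows "(\<Sum>A\<in>Pow X. d ^ card A * (1 - d) ^ card (X - A)) = 1 \<and>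
         (\<Sum>A\<in>Pow X. real (card A) * (d ^ card A * (1 - d) ^ card (X - A))) = real (card X) * d"
  using assms
proof (induction X rule: finite_induct)
  case empty
  then show ?case by simp
next
  case (insert x F)
  let ?q = "\<lambda>A. d ^ card A * (1 - d) ^ card (F - A)"
  let ?Q = "\<lambda>A. d ^ card A * (1 - d) ^ card (insert x F - A)"
  have disj: "Pow F \<inter> insert x ` Pow F = {}" using insert by auto
  have inj: "inj_on (insert x) (Pow F)" using insert unfolding inj_on_def by (metis PowD insert_ident subsetD)
  have fin: "finite (Pow F)" using insert by simp
  have e1: "?Q A = (1 - d) * ?q A" if "A \<in> Pow F" for A
  proof -
    have "insert x F - A = insert x (F - A)" using that insert by auto
    moreover have "finite (F - A)" using insert by auto
    moreover have "x \<notin> F - A" using insert by auto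
    ultimately show ?thesis by simp
  qed
  have e2: "?Q (insert x A) = d * ?q A" if "A \<in> Pow F" for A
  proof -
    have "insert x F - insert x A = F - A" using that insert by auto
    moreover have "card (insert x A) = Suc (card A)"
      using that insert by (meson PowD card_insert_disjoint finite_subset subsetD)
    ultimately show ?thesis by simp
  qed
  have c2: "card (insert x A) = Suc (card A)" if "A \<in> Pow F" for A
      using that insert by (meson PowD card_insert_disjoint finite_subset subsetD)
  have fd: "F - insert x A = F - A" for A using insert by auto
  have split: "(\<Sum>A\<in>Pow (insert x F). g A) = (\<Sum>A\<in>Pow F. g A) + (\<Sum>A\<in>Pow F. g (insert x A))" for g :: "_ set \<Rightarrow> real"
    using fin disj inj by (simp add: Pow_insert sum.union_disjoint sum.reindex)
  have "(\<Sum>A\<in>Pow (insert x F). ?Q A) = (\<Sum>A\<in>Pow F. ?Q A) + (\<Sum>A\<in>Pow F. ?Q (insert x A))"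
    by (rule split)
  also have "\<dots> = (\<Sum>A\<in>Pow F. (1 - d) * ?q A) + (\<Sum>A\<in>Pow F. d * ?q A)"
    by (simp only: sum.cong[OF refl e1] sum.cong[OF refl e2])
  also have "\<dots> = (\<Sum>A\<in>Pow F. ?q A)" by (simp add: sum.distrib[symmetric] algebra_simps)
  finally have s1: "(\<Sum>A\<in>Pow (insert x F). ?Q A) = 1" using insert by simp
  have "(\<Sum>A\<in>Pow (insert x F). real (card A) * ?Q A)
      = (\<Sum>A\<in>Pow F. real (card A) * ((1 - d) * ?q A)) + (\<Sum>A\<in>Pow F. (real (card A) + 1) * (d * ?q A))"
    unfolding split
    by (intro arg_cong2[where f="(+)"] sum.cong refl) (simp_all add: e1 e2 c2 fd)
  also have "\<dots> = (\<Sum>A\<in>Pow F. real (card A) * ?q A) + d * (\<Sum>A\<in>Pow F. ?q A)"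
    by (simp add: algebra_simps sum.distrib[symmetric] sum_distrib_left)
  also have "\<dots> = real (card (insert x F)) * d" using insert by (simp add: algebra_simps)
  finally show ?case using s1 by simp
qed


lemma eval_key:
  assumes "finite S" "c S" "\<not> c' S" "\<And>T. T \<subset> S \<Longrightarrow> c T = c' T"
  shows "eval_poly c S \<noteq> eval_poly c' S"
proof -
  have fin: "finite {T. T \<subset> S \<and> c T}" proof (rule finite_subset)
    show "{T. T \<subset> S \<and> c T} \<subseteq> Pow S" by auto
  qed (use assms(1) in simp)
  have e1: "{T. T \<subseteq> S \<and> c T} = insert S {T. T \<subset> S \<and> c T}" using assms by auto
  have e2: "{T. T \<subseteq> S \<and> c' T} = {T. T \<subset> S \<and> c T}" using assms by auto
  have "card {T. T \<subseteq> S \<and> c T} = Suc (card {T. T \<subset> S \<and> c T})"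
    unfolding e1 using fin by (simp)
  then show ?thesis unfolding eval_poly_def e2 by simp
qed

lemma eval_inj:
  assumes c: "c \<in> tables m" and c': "c' \<in> tables m"
    and eq: "\<forall>x\<in>cube m. eval_poly c x = eval_poly c' x"
  shows "c = c'"
proof (rule ccontr)
  assume "c \<noteq> c'"
  then obtain S0 where "c S0 \<noteq> c' S0" by auto
  then obtain S where S: "c S \<noteq> c' S" and Smin: "\<And>T. c T \<noteq> c' T \<Longrightarrow> card S \<le> card T"
    using ex_has_least_nat[of "\<lambda>S. c S \<noteq> c' S" S0 card] by blast
  have Sc: "S \<in> cube m" using S c c' by (auto simp: tables_def)
  then have finS: "finite S" by (auto simp: cube_def intro: finite_subset)
  have sub: "c T = c' T" if "T \<subset> S" for T
  proof (rule ccontr)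
    assume "c T \<noteq> c' T"
    then have "card S \<le> card T" by (rule Smin)
    moreover have "card T < card S" using that finS by (rule psubset_card_mono[rotated])
    ultimately show False by simp
  qed
  show False
  proof (cases "c S")
    case True
    then have "\<not> c' S" using S by simp
    then have "eval_poly c S \<noteq> eval_poly c' S" using eval_key[of S c c'] finS True sub by blast
    then show False using eq Sc by blast
  next
    case False
    then have "c' S" using S by simp
    then have "eval_poly c' S \<noteq> eval_poly c S" using eval_key[of S c' c] finS False sub by metis
    then show False using eq Sc by metis
  qed
qed

definition Eval :: "nat \<Rightarrow> (nat set \<Rightarrow> bool) \<Rightarrow> nat set \<Rightarrow> bool" where
  "Eval m c = (\<lambda>x. x \<in> cube m \<and> eval_poly c x)"

lemma Eval_surj: "Eval m ` tables m = tables m"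
proof (rule endo_inj_surj)
  show "finite (tables m)" by (rule finite_tables)
  show "Eval m ` tables m \<subseteq> tables m" by (auto simp: Eval_def tables_def)
  show "inj_on (Eval m) (tables m)"
  proof (rule inj_onI)
    fix c c' assume "c \<in> tables m" "c' \<in> tables m" "Eval m c = Eval m c'"
    then show "c = c'" by (intro eval_inj[of c m c']) (auto simp: Eval_def fun_eq_iff)
  qed
qed

lemma coeffs_prop:
  assumes z: "z \<in> tables m"
  shows "coeffs m z \<in> tables m \<and> (\<forall>x\<in>cube m. eval_poly (coeffs m z) x = z x)"
proof -
  obtain c where c: "c \<in> tables m" "z = Eval m c" using z Eval_surj by (metis imageE)
  have ex: "\<exists>!c. (\<forall>S. c S \<longrightarrow> S \<in> cube m) \<and> (\<forall>x\<in>cube m. eval_poly c x = z x)"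
  proof (rule ex1I)
    show "(\<forall>S. c S \<longrightarrow> S \<in> cube m) \<and> (\<forall>x\<in>cube m. eval_poly c x = z x)"
      using c by (auto simp: tables_def Eval_def)
  next
    fix c' assume "(\<forall>S. c' S \<longrightarrow> S \<in> cube m) \<and> (\<forall>x\<in>cube m. eval_poly c' x = z x)"
    then show "c' = c" using c by (intro eval_inj[of c' m c]) (auto simp: tables_def Eval_def)
  qed
  show ?thesis using theI'[OF ex] unfolding coeffs_def[symmetric] by (auto simp: tables_def)
qed

lemma coeffs_inj:
  assumes "z \<in> tables m" "z' \<in> tables m" "coeffs m z = coeffs m z'"
  shows "z = z'"
proof
  fix x
  show "z x = z' x"
  proof (cases "x \<in> cube m")
    case True then show ?thesis using coeffs_prop[OF assms(1)] coeffs_prop[OF assms(2)] assms(3) by metis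
  next
    case False then show ?thesis using assms(1,2) by (auto simp: tables_def)
  qed
qed


definition Hx :: "nat \<Rightarrow> real \<Rightarrow> ((nat set \<Rightarrow> bool) \<Rightarrow> 'a) \<Rightarrow> real" where
  "Hx m d X = (\<Sum>z\<in>tables m. prob_tab m d z * - log 2 (prob_event m d (\<lambda>z'. X z' = X z)))"

context
  fixes m :: nat and d :: real
  assumes d0: "0 < d" and d1: "d < 1"
begin

lemma p_pos: "0 < prob_tab m d z"
  using d0 d1 by (simp add: prob_tab_def)

lemma PE_ge: "z \<in> tables m \<Longrightarrow> E z \<Longrightarrow> prob_tab m d z \<le> prob_event m d E"
  unfolding prob_event_def
  by (rule member_le_sum) (auto simp: finite_tables less_imp_le[OF p_pos])

lemma PE_pos: "z \<in> tables m \<Longrightarrow> E z \<Longrightarrow> 0 < prob_event m d E"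
  using PE_ge p_pos by (meson less_le_trans)

lemma PE_mono: "(\<And>z. z \<in> tables m \<Longrightarrow> E z \<Longrightarrow> E' z) \<Longrightarrow> prob_event m d E \<le> prob_event m d E'"
  unfolding prob_event_def
  by (rule sum_mono2) (auto simp: finite_tables less_imp_le[OF p_pos])

lemma sum_p: "(\<Sum>z\<in>tables m. prob_tab m d z) = 1"
  using binom_sums[OF finite_cube, of d m]
  by (simp add: sum_tables prob_tab_Pow)

lemma cond_eq:
  "cond_entropy m d A B = (\<Sum>z\<in>tables m. prob_tab m d z *
      log 2 (prob_event m d (\<lambda>z'. B z' = B z) / prob_event m d (\<lambda>z'. (A z', B z') = (A z, B z))))"
proof -
  let ?X = "\<lambda>z. (A z, B z)"
  let ?g = "\<lambda>ab. log 2 (prob_event m d (\<lambda>z. B z = snd ab) / prob_event m d (\<lambda>z. A z = fst ab \<and> B z = snd ab))"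
  have "(\<Sum>z\<in>tables m. prob_tab m d z *
      log 2 (prob_event m d (\<lambda>z'. B z' = B z) / prob_event m d (\<lambda>z'. (A z', B z') = (A z, B z))))
     = (\<Sum>z\<in>tables m. prob_tab m d z * ?g (?X z))" by simp
  also have "\<dots> = (\<Sum>y\<in>?X ` tables m. \<Sum>z\<in>{z. z \<in> tables m \<and> ?X z = y}. prob_tab m d z * ?g (?X z))"
    by (rule sum.image_gen[OF finite_tables])
  also have "\<dots> = (\<Sum>y\<in>?X ` tables m. \<Sum>z\<in>{z. z \<in> tables m \<and> ?X z = y}. prob_tab m d z * ?g y)"
    by (intro sum.cong refl) auto
  also have "\<dots> = (\<Sum>y\<in>?X ` tables m. prob_event m d (\<lambda>z. A z = fst y \<and> B z = snd y) * ?g y)"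
    unfolding prob_event_def sum_distrib_right[symmetric]
    by (intro sum.cong refl arg_cong2[where f="(*)"] arg_cong2[where f=sum]) auto
  finally show ?thesis unfolding cond_entropy_def Let_def by simp
qed

lemma cond_split:
  "cond_entropy m d A B = Hx m d (\<lambda>z. (A z, B z)) - Hx m d B"
  unfolding cond_eq Hx_def sum_subtractf[symmetric]
proof (intro sum.cong refl)
  fix z assume z: "z \<in> tables m"
  have "0 < prob_event m d (\<lambda>z'. B z' = B z)" by (rule PE_pos[OF z]) simp
  moreover have "0 < prob_event m d (\<lambda>z'. (A z', B z') = (A z, B z))" by (rule PE_pos[OF z]) simp
  ultimately show "prob_tab m d z *
      log 2 (prob_event m d (\<lambda>z'. B z' = B z) / prob_event m d (\<lambda>z'. (A z', B z') = (A z, B z)))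
    = prob_tab m d z * - log 2 (prob_event m d (\<lambda>z'. (A z', B z') = (A z, B z))) -
      prob_tab m d z * - log 2 (prob_event m d (\<lambda>z'. B z' = B z))"
    by (simp add: log_divide_pos algebra_simps)
qed

lemma cond_nonneg: "0 \<le> cond_entropy m d A B"
  unfolding cond_eq
proof (rule sum_nonneg)
  fix z assume z: "z \<in> tables m"
  have a: "0 < prob_event m d (\<lambda>z'. (A z', B z') = (A z, B z))" by (rule PE_pos[OF z]) simp
  have "prob_event m d (\<lambda>z'. (A z', B z') = (A z, B z)) \<le> prob_event m d (\<lambda>z'. B z' = B z)"
    by (rule PE_mono) simp
  then have "1 \<le> prob_event m d (\<lambda>z'. B z' = B z) / prob_event m d (\<lambda>z'. (A z', B z') = (A z, B z))"
    using a by simp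
  then have "0 \<le> log 2 (prob_event m d (\<lambda>z'. B z' = B z) / prob_event m d (\<lambda>z'. (A z', B z') = (A z, B z)))"
    by simp
  then show "0 \<le> prob_tab m d z * log 2 (prob_event m d (\<lambda>z'. B z' = B z) / prob_event m d (\<lambda>z'. (A z', B z') = (A z, B z)))"
    using p_pos by (simp add: less_imp_le)
qed

lemma Hx_cong:
  assumes "\<And>z z'. z \<in> tables m \<Longrightarrow> z' \<in> tables m \<Longrightarrow> (X z' = X z) = (Y z' = Y z)"
  shows "Hx m d X = Hx m d Y"
  unfolding Hx_def prob_event_def
  by (intro sum.cong refl arg_cong2[where f="(*)"] arg_cong[where f="\<lambda>x. - log 2 x"]
        arg_cong2[where f=sum]) (use assms in auto)

lemma Hx_const: "Hx m d (\<lambda>z. c) = 0"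
  unfolding Hx_def by (simp add: prob_event_def sum_p)

lemma Hx_id: "Hx m d (\<lambda>z. z) = 2 ^ m * bin_entropy d"
proof -
  let ?C = "cube m"
  let ?q = "\<lambda>A. d ^ card A * (1 - d) ^ card (?C - A)"
  have "Hx m d (\<lambda>z. z) = (\<Sum>z\<in>tables m. prob_tab m d z * - log 2 (prob_tab m d z))"
    unfolding Hx_def prob_event_def
    by (intro sum.cong refl) (simp add: Collect_conj_eq Int_absorb2 Int_commute[of "tables m"] )
  also have "\<dots> = (\<Sum>A\<in>Pow ?C. ?q A * - log 2 (?q A))"
    by (simp add: sum_tables prob_tab_Pow)
  also have "\<dots> = (\<Sum>A\<in>Pow ?C. (- log 2 d) * (real (card A) * ?q A) + (- log 2 (1 - d)) * (real (card ?C) * ?q A - real (card A) * ?q A))"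
  proof (intro sum.cong refl)
    fix A assume A: "A \<in> Pow ?C"
    have "card (?C - A) = card ?C - card A" using A finite_cube by (simp add: card_Diff_subset finite_subset)
    moreover have "card A \<le> card ?C" using A finite_cube by (simp add: card_mono)
    ultimately have eq: "real (card ?C) = real (card A) + real (card (?C - A))" by simp
    have lg: "log 2 (?q A) = real (card A) * log 2 d + real (card (?C - A)) * log 2 (1 - d)"
      using d0 d1 by (simp add: log_mult_pos log_nat_power)
    show "?q A * - log 2 (?q A) = (- log 2 d) * (real (card A) * ?q A) + (- log 2 (1 - d)) * (real (card ?C) * ?q A - real (card A) * ?q A)"
      by (simp only: eq lg) (simp add: algebra_simps)
  qed
  also have "\<dots> = (- log 2 d) * (\<Sum>A\<in>Pow ?C. real (card A) * ?q A) + (- log 2 (1 - d)) * (real (card ?C) * (\<Sum>A\<in>Pow ?C. ?q A) - (\<Sum>A\<in>Pow ?C. real (card A) * ?q A))"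
    by (simp only: sum.distrib sum_subtractf sum_distrib_left[symmetric])
  also have "\<dots> = 2 ^ m * bin_entropy d"
    using binom_sums[OF finite_cube, of d m] by (simp add: card_cube bin_entropy_def algebra_simps)
  finally show ?thesis .
qed

end

context
  fixes m :: nat and d :: real
  assumes d0: "0 < d" and d1: "d < 1"
begin

lemma f_split: "f_ent m d r = Hx m d (\<lambda>z. (W_eq m r z, W_gt m r z)) - Hx m d (W_gt m r)"
  unfolding f_ent_def by (rule cond_split[OF d0 d1])

lemma pair0: "Hx m d (\<lambda>z. (W_eq m 0 z, W_gt m 0 z)) = Hx m d (\<lambda>z. z)"
proof (rule Hx_cong[OF d0 d1])
  fix z z' assume z: "z \<in> tables m" and z': "z' \<in> tables m"
  show "((W_eq m 0 z', W_gt m 0 z') = (W_eq m 0 z, W_gt m 0 z)) = (z' = z)"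
  proof
    assume h: "(W_eq m 0 z', W_gt m 0 z') = (W_eq m 0 z, W_gt m 0 z)"
    have "coeffs m z' = coeffs m z"
    proof
      fix S
      show "coeffs m z' S = coeffs m z S"
      proof (cases "S \<in> cube m")
        case True
        show ?thesis
        proof (cases "card S = 0")
          case True
          have "W_eq m 0 z' S = W_eq m 0 z S" using h by simp
          then show ?thesis using True \<open>S \<in> cube m\<close> unfolding W_eq_def by simp
        next
          case False
          have "W_gt m 0 z' S = W_gt m 0 z S" using h by simp
          then show ?thesis using False \<open>S \<in> cube m\<close> unfolding W_gt_def by simp
        qed
      next
        case False
        then show ?thesis using coeffs_prop[OF z] coeffs_prop[OF z'] by (auto simp: tables_def)
      qed
    qed
    then show "z' = z" using coeffs_inj[OF z' z] by simp
  qed simp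
qed

lemma pairSuc: "Hx m d (\<lambda>z. (W_eq m (Suc r) z, W_gt m (Suc r) z)) = Hx m d (W_gt m r)"
proof (rule Hx_cong[OF d0 d1])
  fix z z' :: "nat set \<Rightarrow> bool"
  have a: "W_gt m r y = (\<lambda>S. if card S = Suc r then W_eq m (Suc r) y S else W_gt m (Suc r) y S)" for y
    by (auto simp: W_gt_def W_eq_def fun_eq_iff)
  have b: "W_eq m (Suc r) y = (\<lambda>S. if card S = Suc r then W_gt m r y S else False)" for y
    by (auto simp: W_gt_def W_eq_def fun_eq_iff)
  have c: "W_gt m (Suc r) y = (\<lambda>S. if card S > Suc r then W_gt m r y S else False)" for y
    by (auto simp: W_gt_def W_eq_def fun_eq_iff)
  show "((W_eq m (Suc r) z', W_gt m (Suc r) z') = (W_eq m (Suc r) z, W_gt m (Suc r) z)) =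
        (W_gt m r z' = W_gt m r z)"
  proof
    assume "(W_eq m (Suc r) z', W_gt m (Suc r) z') = (W_eq m (Suc r) z, W_gt m (Suc r) z)"
    then show "W_gt m r z' = W_gt m r z" by (subst (1 2) a) simp
  next
    assume h: "W_gt m r z' = W_gt m r z"
    show "(W_eq m (Suc r) z', W_gt m (Suc r) z') = (W_eq m (Suc r) z, W_gt m (Suc r) z)"
      by (subst (1 2) b, subst (1 2) c) (simp add: h)
  qed
qed

lemma Wgt_m: "W_gt m m z = (\<lambda>S. False)"
proof -
  have "card S \<le> m" if "S \<in> cube m" for S
    using that card_mono[of "{..<m}" S] by (auto simp: cube_def)
  then show ?thesis unfolding W_gt_def fun_eq_iff by (meson not_le)
qed

lemma telescope: "(\<Sum>r\<le>k. f_ent m d r) = Hx m d (\<lambda>z. z) - Hx m d (W_gt m k)"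
proof (induction k)
  case 0
  then show ?case by (simp add: f_split pair0)
next
  case (Suc k)
  then show ?case by (simp add: f_split pairSuc)
qed

lemma total: "(\<Sum>r\<le>m. f_ent m d r) = 2 ^ m * bin_entropy d"
proof -
  have "Hx m d (W_gt m m) = Hx m d (\<lambda>z. (\<lambda>S::nat set. False))"
    by (rule arg_cong[where f="Hx m d"]) (simp add: fun_eq_iff Wgt_m)
  then show ?thesis by (simp add: telescope Hx_const[OF d0 d1] Hx_id[OF d0 d1])
qed

end

theorem claim7p1:
  fixes m :: nat and \<delta> \<epsilon> :: real
  assumes "m \<ge> 1" and "0 < \<delta>" and "\<delta> < 1/2" and "0 < \<epsilon>" and "\<epsilon> < 1"
  shows "real (binom_le m (r_thr m \<delta> \<epsilon>)) / 2 ^ m \<ge> 1 - bin_entropy \<delta> / (1 - \<epsilon>)"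
proof -
  have d0: "0 < \<delta>" and d1: "\<delta> < 1" using assms by auto
  define R where "R = r_thr m \<delta> \<epsilon>"
  define Set where "Set = {r. r \<le> m \<and> f_avg m \<delta> r < 1 - \<epsilon>}"
  have finSet: "finite Set" unfolding Set_def by (rule finite_subset[of _ "{..m}"]) auto
  have Rle: "R \<le> int m" and Rge: "-1 \<le> R"
  proof -
    show "R \<le> int m"
    proof (cases "Set = {}")
      case False
      then have "Max Set \<in> Set" using finSet by simp
      then show ?thesis using False unfolding R_def r_thr_def Set_def[symmetric] by (simp add: Set_def)
    qed (simp add: R_def r_thr_def Set_def[symmetric])
    show "-1 \<le> R" by (simp add: R_def r_thr_def)
  qed
  have big: "(1 - \<epsilon>) * real (m choose r) \<le> f_ent m \<delta> r" if "r \<le> m" "R < int r" for r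
  proof -
    have "r \<notin> Set"
    proof
      assume "r \<in> Set"
      then have "Set \<noteq> {}" "r \<le> Max Set" using finSet by auto
      then show False using that unfolding R_def r_thr_def Set_def[symmetric] by simp
    qed
    then have "1 - \<epsilon> \<le> f_avg m \<delta> r" using that by (simp add: Set_def)
    moreover have "0 < real (m choose r)" using that by simp
    ultimately show ?thesis by (simp add: f_avg_def pos_le_divide_eq mult.commute)
  qed
  define k where "k = nat (R + 1)"
  have km: "k \<le> Suc m" using Rle Rge by (simp add: k_def)
  have img: "{0..R} = int ` {0..<k}"
  proof
    show "{0..R} \<subseteq> int ` {0..<k}"
    proof
      fix i assume "i \<in> {0..R}"
      then have "i = int (nat i)" "nat i \<in> {0..<k}" by (auto simp: k_def)
      then show "i \<in> int ` {0..<k}" by blast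
    qed
  qed (auto simp: k_def)
  have B: "binom_le m R = (\<Sum>r\<in>{0..<k}. m choose r)"
    unfolding binom_le_def img by (simp add: sum.reindex)
  have rows: "(\<Sum>r\<in>{0..<Suc m}. real (m choose r)) = 2 ^ m"
    using choose_row_sum[of m] by (simp add: atLeast0LessThan lessThan_Suc_atMost of_nat_sum[symmetric])
  have tot: "(\<Sum>r\<in>{0..<Suc m}. f_ent m \<delta> r) = 2 ^ m * bin_entropy \<delta>"
    using total[OF d0 d1] by (simp add: atLeast0LessThan lessThan_Suc_atMost)
  have split: "(\<Sum>r\<in>{0..<Suc m}. g r) = (\<Sum>r\<in>{0..<k}. g r) + (\<Sum>r\<in>{k..<Suc m}. g r)" for g :: "nat \<Rightarrow> real"
    using sum.atLeastLessThan_concat[of 0 k "Suc m" g] km by simp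
  have "(1 - \<epsilon>) * (\<Sum>r\<in>{k..<Suc m}. real (m choose r)) = (\<Sum>r\<in>{k..<Suc m}. (1 - \<epsilon>) * real (m choose r))"
    by (rule sum_distrib_left)
  also have "\<dots> \<le> (\<Sum>r\<in>{k..<Suc m}. f_ent m \<delta> r)"
    by (rule sum_mono, rule big) (auto simp: k_def)
  also have "\<dots> \<le> (\<Sum>r\<in>{0..<Suc m}. f_ent m \<delta> r)"
    unfolding split[of "f_ent m \<delta>"]
    using sum_nonneg[of "{0..<k}" "f_ent m \<delta>"] by (simp add: f_ent_def cond_nonneg[OF d0 d1])
  finally have ineq: "(1 - \<epsilon>) * (2 ^ m - real (binom_le m R)) \<le> 2 ^ m * bin_entropy \<delta>"
    using rows tot split[of "\<lambda>r. real (m choose r)"] B by simp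
  have e: "0 < 1 - \<epsilon>" using assms by simp
  have "1 - bin_entropy \<delta> / (1 - \<epsilon>) \<le> real (binom_le m R) / 2 ^ m"
    using ineq e by (simp add: field_simps)
  then show ?thesis by (simp add: R_def)
qed

end
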